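(* Let $B,\lambda>0$, $q\in\mathbb N$, $\alpha\in(0,1]$, $\beta=q+\alpha\ge1/2$, and let $\mathcal F$ be the set of functions $f:[0,1]\to\mathbb R$ that are $q$ times differentiable with $\|f^{(k)}\|_\infty\le B$ for all $k\in\{0,\ldots,q\}$ and $|f^{(q)}(x)-f^{(q)}(y)|\le\lambda|x-y|^\alpha$ for all $x,y\in[0,1]$. Let $\gamma>0$, $\delta_x=2(q!\gamma/(2\lambda))^{1/\beta}$, $\delta_y=\gamma/e$, and assume $1/\delta_x$ and $2B/\delta_y$ are integers. Then, with $\mathcal F^{(0)}$ and $\mathcal F^{(M)}$ as defined in the context: (i) for every $f\in\mathcal F$ there is $g\in\mathcal F^{(0)}$ with $\|f-g\|_\infty\le\gamma$; (ii) for every $M\ge1$ and every $f\in\mathcal F$ there is $g\in\mathcal F^{(M)}$ with $\|f-g\|_\infty\le\gamma/2^M$.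
   Context: $[x]_c=\min\{c,\max\{-c,x\}\}$ denotes clipping. Let $I_a=[(a-1)\delta_x,a\delta_x)$, $a=1,\ldots,1/\delta_x$ (last closed at $1$), with center $x_a$. For $m\ge1$ split $I_a$ into $4^m$ consecutive subintervals $I_a^{(m,n)}$, $n=1,\ldots,4^m$, of length $\delta_x/4^m$, with centers $x_a^{(m,n)}$; for $m\ge2$ let $n_{m-1}$ be the index with $I_a^{(m,n)}\subset I_a^{(m-1,n_{m-1})}$. Let $\mathcal Y^{(m)}=\{-B+j\delta_y/2^m:j=0,\ldots,2^{m+1}B/\delta_y\}$ for $m\ge0$. Let $\mathcal P_a^{(0)}$ be the set of functions $x\mapsto[\sum_{i=0}^q\frac{a_i}{i!}(x-x_a)^i]_B$ with $a_0,\ldots,a_q\in\mathcal Y^{(0)}$, and $\mathcal P_a^{(m,n)}$ the set of functions $x\mapsto[\sum_{i=0}^q\frac{a_i}{i!}(x-x_a^{(m,n)})^i]_B$ with $a_i\in\mathcal Y^{(m)}$. Let $\mathcal Q_a^{(m,n)}=\{[P-P']_{3\gamma/2^m}:P\in\mathcal P_a^{(m,n)},P'\in\mathcal P_a^{(m-1,n_{m-1})}\}$ for $m\ge2$, and with $\mathcal P_a^{(0)}$ in place of $\mathcal P_a^{(m-1,n_{m-1})}$ for $m=1$. $\mathcal F^{(0)}$ is the set of functions $\sum_{a}P_a^{(0)}(x)\mathbb 1\{x\in I_a\}$ with $P_a^{(0)}\in\mathcal P_a^{(0)}$; $\mathcal F^{(M)}$ is the set of functions $\sum_aP_a^{(0)}(x)\mathbb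 1\{x\in I_a\}+\sum_{m=1}^M\sum_a\sum_{n=1}^{4^m}Q_a^{(m,n)}(x)\mathbb 1\{x\in I_a^{(m,n)}\}$ with $P_a^{(0)}\in\mathcal P_a^{(0)}$, $Q_a^{(m,n)}\in\mathcal Q_a^{(m,n)}$. *)

theory Defs
  imports "HOL-Analysis.Analysis"
begin

definition clip :: "real \<Rightarrow> real \<Rightarrow> real" where
  "clip c x = min c (max (-c) x)"

definition holder_class :: "real \<Rightarrow> real \<Rightarrow> nat \<Rightarrow> real \<Rightarrow> (real \<Rightarrow> real) set" where
  "holder_class B lam q alpha = {f. \<exists>D :: nat \<Rightarrow> real \<Rightarrow> real.
      (\<forall>x\<in>{0..1}. D 0 x = f x) \<and>
      (\<forall>k<q. \<forall>x\<in>{0..1}. (D k has_real_derivative D (Suc k) x) (at x within {0..1})) \<and>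
      (\<forall>k\<le>q. \<forall>x\<in>{0..1}. \<bar>D k x\<bar> \<le> B) \<and>
      (\<forall>x\<in>{0..1}. \<forall>y\<in>{0..1}. \<bar>D q x - D q y\<bar> \<le> lam * \<bar>x - y\<bar> powr alpha)}"

definition idx :: "real \<Rightarrow> nat set" where
  "idx dx = {a. 1 \<le> a \<and> real a \<le> 1 / dx}"

text \<open>Left/right endpoints of I_a^(m,n); (m,n) = (0,1) gives I_a itself.\<close>
definition lo_pt :: "real \<Rightarrow> nat \<Rightarrow> nat \<Rightarrow> nat \<Rightarrow> real" where
  "lo_pt dx a m n = (real a - 1) * dx + (real n - 1) * dx / 4 ^ m"

definition hi_pt :: "real \<Rightarrow> nat \<Rightarrow> nat \<Rightarrow> nat \<Rightarrow> real" where
  "hi_pt dx a m n = (real a - 1) * dx + real n * dx / 4 ^ m"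

definition subint :: "real \<Rightarrow> nat \<Rightarrow> nat \<Rightarrow> nat \<Rightarrow> real set" where
  "subint dx a m n = {x. lo_pt dx a m n \<le> x \<and>
      (x < hi_pt dx a m n \<or> (hi_pt dx a m n = 1 \<and> x = 1))}"

definition center :: "real \<Rightarrow> nat \<Rightarrow> nat \<Rightarrow> nat \<Rightarrow> real" where
  "center dx a m n = (lo_pt dx a m n + hi_pt dx a m n) / 2"

definition grid :: "real \<Rightarrow> real \<Rightarrow> nat \<Rightarrow> real set" where
  "grid B dy m = {- B + real j * dy / 2 ^ m | j :: nat. real j \<le> 2 ^ (m + 1) * B / dy}"

text \<open>P_a^(m,n); P_a^(0) is the case m = 0, n = 1 (center x_a, grid Y^(0)).\<close>
definition polyset :: "nat \<Rightarrow> real \<Rightarrow> real \<Rightarrow> real \<Rightarrow> nat \<Rightarrow> nat \<Rightarrow> nat \<Rightarrow> (real \<Rightarrow> real) set" where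
  "polyset q B dx dy a m n = {(\<lambda>x. clip B (\<Sum>i\<le>q. c i / fact i * (x - center dx a m n) ^ i)) | c.
      \<forall>i\<le>q. c i \<in> grid B dy m}"

text \<open>Parent index n_(m-1) (1-based): (n-1) div 4 + 1; for m = 1 this is 1.\<close>
definition parent :: "nat \<Rightarrow> nat" where
  "parent n = (n - 1) div 4 + 1"

definition Qset :: "nat \<Rightarrow> real \<Rightarrow> real \<Rightarrow> real \<Rightarrow> real \<Rightarrow> nat \<Rightarrow> nat \<Rightarrow> nat \<Rightarrow> (real \<Rightarrow> real) set" where
  "Qset q B gam dx dy a m n = {(\<lambda>x. clip (3 * gam / 2 ^ m) (P x - P' x)) | P P'.
      P \<in> polyset q B dx dy a m n \<and> P' \<in> polyset q B dx dy a (m - 1) (parent n)}"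

text \<open>F^(M); F^(0) is the case M = 0.\<close>
definition Fclass :: "nat \<Rightarrow> real \<Rightarrow> real \<Rightarrow> real \<Rightarrow> real \<Rightarrow> nat \<Rightarrow> (real \<Rightarrow> real) set" where
  "Fclass q B gam dx dy M = {(\<lambda>x. (\<Sum>a\<in>idx dx. P a x * of_bool (x \<in> subint dx a 0 1)) +
        (\<Sum>m\<in>{1..M}. \<Sum>a\<in>idx dx. \<Sum>n\<in>{1..4 ^ m}. Q a m n x * of_bool (x \<in> subint dx a m n)))
      | P Q. (\<forall>a\<in>idx dx. P a \<in> polyset q B dx dy a 0 1) \<and>
        (\<forall>m\<in>{1..M}. \<forall>a\<in>idx dx. \<forall>n\<in>{1..4 ^ m}. Q a m n \<in> Qset q B gam dx dy a m n)}"

end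

theory Submission
  imports Defs
begin


lemma cmp_bound:
  fixes h g h' g' :: "real \<Rightarrow> real"
  assumes "a \<le> b" "continuous_on {a..b} h" "continuous_on {a..b} g"
    "\<And>t. a < t \<Longrightarrow> t < b \<Longrightarrow> (h has_real_derivative h' t) (at t)"
    "\<And>t. a < t \<Longrightarrow> t < b \<Longrightarrow> (g has_real_derivative g' t) (at t)"
    "\<And>t. a < t \<Longrightarrow> t < b \<Longrightarrow> \<bar>h' t\<bar> \<le> g' t"
  shows "\<bar>h b - h a\<bar> \<le> g b - g a"
proof -
  have 1: "(\<lambda>t. g t - h t) a \<le> (\<lambda>t. g t - h t) b"
  proof (rule DERIV_nonneg_imp_increasing_open[OF assms(1)])
    fix t assume "a < t" "t < b"
    then show "\<exists>y. ((\<lambda>t. g t - h t) has_real_derivative y) (at t) \<and> 0 \<le> y"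
      using assms(4-6) by (intro exI[of _ "g' t - h' t"]) (force intro!: derivative_eq_intros simp: abs_le_iff)
  qed (use assms(2,3) in \<open>intro continuous_intros\<close>)
  have 2: "(\<lambda>t. g t + h t) a \<le> (\<lambda>t. g t + h t) b"
  proof (rule DERIV_nonneg_imp_increasing_open[OF assms(1)])
    fix t assume "a < t" "t < b"
    then show "\<exists>y. ((\<lambda>t. g t + h t) has_real_derivative y) (at t) \<and> 0 \<le> y"
      using assms(4-6) by (intro exI[of _ "g' t + h' t"]) (force intro!: derivative_eq_intros simp: abs_le_iff)
  qed (use assms(2,3) in \<open>intro continuous_intros\<close>)
  show ?thesis using 1 2 by simp
qed

lemma poly_deriv:
  fixes a :: "nat \<Rightarrow> real"
  shows "((\<lambda>x. \<Sum>i\<le>Suc n. a i / fact i * (x - c) ^ i) has_real_derivative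
          (\<Sum>i\<le>n. a (Suc i) / fact i * (x - c) ^ i)) (at x within S)"
proof (induction n)
  case 0
  show ?case by (auto intro!: derivative_eq_intros)
next
  case (Suc n)
  have e: "(\<lambda>x. \<Sum>i\<le>Suc (Suc n). a i / fact i * (x - c) ^ i) =
     (\<lambda>x. (\<Sum>i\<le>Suc n. a i / fact i * (x - c) ^ i) + a (Suc (Suc n)) / fact (Suc (Suc n)) * (x - c) ^ Suc (Suc n))"
    by simp
  have d: "((\<lambda>x. a (Suc (Suc n)) / fact (Suc (Suc n)) * (x - c) ^ Suc (Suc n)) has_real_derivative
      a (Suc (Suc n)) / fact (Suc n) * (x - c) ^ Suc n) (at x within S)"
  proof -
    have p: "((\<lambda>x. (x-c)^Suc (Suc n)) has_real_derivative real (Suc (Suc n)) * (x-c)^(Suc n)) (at x within S)"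
      apply (auto intro!: derivative_eq_intros) apply (cases n) apply (auto simp: algebra_simps) done
    have q: "a (Suc (Suc n)) / fact (Suc (Suc n)) * (real (Suc (Suc n)) * (x-c)^(Suc n)) = a (Suc (Suc n)) / fact (Suc n) * (x - c) ^ Suc n"
    proof -
      have F: "(fact (Suc (Suc n))::real) = real (Suc (Suc n)) * fact (Suc n)" by (simp only: fact_Suc of_nat_mult)
      have nz: "(fact (Suc n)::real) \<noteq> 0" by simp
      show ?thesis unfolding F using nz by (simp add: field_simps del: fact_Suc of_nat_Suc)
    qed
    show ?thesis using DERIV_cmult[OF p, of "a (Suc (Suc n)) / fact (Suc (Suc n))"] q by simp
  qed
  show ?case unfolding e using DERIV_add[OF Suc d] by simp
qed

lemma sum_zero_pow:
  fixes a :: "nat \<Rightarrow> real"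
  shows "(\<Sum>i\<le>n. a i / fact i * 0 ^ i) = a 0"
  by (induction n) auto


lemma fact_ineq:
  fixes lam alpha s :: real
  assumes "lam > 0" "alpha > 0" "s \<ge> 0"
  shows "lam * s powr (alpha + real j) / fact j \<le> lam * (alpha + real (Suc j)) * s powr (alpha + real j) / fact (Suc j)"
proof -
  define A where "A = lam * s powr (alpha + real j)"
  define F where "F = (fact j :: real)"
  have Fp: "F > 0" unfolding F_def by simp
  have A: "A \<ge> 0" unfolding A_def using assms by simp
  have FS: "(fact (Suc j)::real) = real (Suc j) * F" unfolding F_def by (simp only: fact_Suc of_nat_mult)
  have "A / F = A * real (Suc j) / (real (Suc j) * F)" by simp
  also have "\<dots> \<le> A * (alpha + real (Suc j)) / (real (Suc j) * F)"
    using A Fp assms by (intro divide_right_mono mult_left_mono) auto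
  finally show ?thesis unfolding FS A_def F_def by (simp add: mult.commute mult.left_commute)
qed

lemma taylor_gen:
  fixes D :: "nat \<Rightarrow> real \<Rightarrow> real" and j q :: nat and c lam alpha :: real
  assumes Dd: "\<forall>k<q. \<forall>x\<in>{0..1}. (D k has_real_derivative D (Suc k) x) (at x within {0..1})"
  and H: "\<forall>x\<in>{0..1}. \<forall>y\<in>{0..1}. \<bar>D q x - D q y\<bar> \<le> lam * \<bar>x - y\<bar> powr alpha"
  and lam: "lam > 0" and al: "alpha > 0" and c: "c \<in> {0..1}"
  and jq: "j \<le> q"
  shows "\<forall>x\<in>{0..1}. \<bar>D (q-j) x - (\<Sum>i\<le>j. D (q-j+i) c / fact i * (x-c)^i)\<bar>
           \<le> lam * \<bar>x-c\<bar> powr (alpha + real j) / fact j"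
  using jq
proof (induction j)
  case 0
  then show ?case using H c by simp
next
  case (Suc j)
  define k where "k = q - Suc j"
  have kq: "k < q" "Suc k = q - j" using Suc.prems unfolding k_def by auto
  define h where "h x = D k x - (\<Sum>i\<le>Suc j. D (k+i) c / fact i * (x-c)^i)" for x
  define h' where "h' x = D (Suc k) x - (\<Sum>i\<le>j. D (Suc k + i) c / fact i * (x-c)^i)" for x
  have hd: "(h has_real_derivative h' x) (at x within {0..1})" if "x \<in> {0..1}" for x
  proof -
    have "(D k has_real_derivative D (Suc k) x) (at x within {0..1})" using Dd kq that by blast
    from DERIV_diff[OF this poly_deriv[where a="\<lambda>i. D (k+i) c" and n=j and c=c and x=x and S="{0..1}"]]
    show ?thesis unfolding h_def h'_def by simp
  qed
  have IH: "\<bar>h' x\<bar> \<le> lam * \<bar>x-c\<bar> powr (alpha + real j) / fact j" if "x \<in> {0..1}" for x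
  proof -
    have "\<And>i. q - j + i = Suc k + i" using kq by simp
    then show ?thesis using Suc.IH Suc.prems that unfolding h'_def kq(2) by simp
  qed
  have hc: "h c = 0" unfolding h_def by (simp add: sum_zero_pow)
  have hcont: "continuous_on {0..1} h" by (rule DERIV_continuous_on[OF hd])
  have hat: "(h has_real_derivative h' t) (at t)" if "0 < t" "t < 1" for t
  proof -
    have "(h has_real_derivative h' t) (at t within {0<..<1})"
      by (rule has_field_derivative_subset[OF hd]) (use that in auto)
    then show ?thesis using at_within_open[of t "{0<..<1}"] that by simp
  qed
  define r where "r = alpha + real (Suc j)"
  have r1: "r - 1 = alpha + real j" unfolding r_def by simp
  have rpos: "r > 0" unfolding r_def using al by simp
  show ?case
  proof
    fix x :: real assume x: "x \<in> {0..1}"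
    have goal: "D (q - Suc j) x - (\<Sum>i\<le>Suc j. D (q - Suc j + i) c / fact i * (x - c) ^ i) = h x"
      unfolding h_def k_def by simp
    have "\<bar>h x\<bar> \<le> lam * \<bar>x - c\<bar> powr r / fact (Suc j)"
    proof (cases "c \<le> x")
      case True
      define g where "g t = lam * (t - c) powr r / fact (Suc j)" for t
      have "\<bar>h x - h c\<bar> \<le> g x - g c"
      proof (rule cmp_bound[OF True, where h'=h' and g'="\<lambda>t. lam * r * (t - c) powr (r - 1) / fact (Suc j)"])
        show "continuous_on {c..x} h" using hcont c x by (auto intro: continuous_on_subset)
        show "continuous_on {c..x} g" unfolding g_def using rpos
          by (intro continuous_intros continuous_on_powr') auto
        fix t assume t: "c < t" "t < x"
        show "(h has_real_derivative h' t) (at t)" using hat t c x by auto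
        show "(g has_real_derivative lam * r * (t - c) powr (r - 1) / fact (Suc j)) (at t)"
          unfolding g_def using t by (auto intro!: derivative_eq_intros)
        have "\<bar>h' t\<bar> \<le> lam * \<bar>t-c\<bar> powr (alpha + real j) / fact j"
          using IH[of t] t c x by simp
        also have "\<dots> \<le> lam * (alpha + real (Suc j)) * \<bar>t-c\<bar> powr (alpha + real j) / fact (Suc j)"
          by (rule fact_ineq) (use lam al in auto)
        also have "\<dots> = lam * r * (t - c) powr (r - 1) / fact (Suc j)" using t unfolding r1 r_def by simp
        finally show "\<bar>h' t\<bar> \<le> lam * r * (t - c) powr (r - 1) / fact (Suc j)" .
      qed
      then show ?thesis using hc True unfolding g_def using rpos by simp
    next
      case False
      define g where "g t = - lam * (c - t) powr r / fact (Suc j)" for t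
      have "\<bar>h c - h x\<bar> \<le> g c - g x"
      proof (rule cmp_bound[where h'=h' and g'="\<lambda>t. lam * r * (c - t) powr (r - 1) / fact (Suc j)"])
        show "x \<le> c" using False by simp
        show "continuous_on {x..c} h" using hcont c x by (auto intro: continuous_on_subset)
        show "continuous_on {x..c} g" unfolding g_def using rpos
          by (intro continuous_intros continuous_on_powr') auto
        fix t assume t: "x < t" "t < c"
        show "(h has_real_derivative h' t) (at t)" using hat t c x by auto
        show "(g has_real_derivative lam * r * (c - t) powr (r - 1) / fact (Suc j)) (at t)"
          unfolding g_def using t by (auto intro!: derivative_eq_intros)
        have "\<bar>h' t\<bar> \<le> lam * \<bar>t-c\<bar> powr (alpha + real j) / fact j"
          using IH[of t] t c x by simp
        also have "\<dots> \<le> lam * (alpha + real (Suc j)) * \<bar>t-c\<bar> powr (alpha + real j) / fact (Suc j)"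
          by (rule fact_ineq) (use lam al in auto)
        also have "\<dots> = lam * r * (c - t) powr (r - 1) / fact (Suc j)" using t unfolding r1 r_def by simp
        finally show "\<bar>h' t\<bar> \<le> lam * r * (c - t) powr (r - 1) / fact (Suc j)" .
      qed
      then show ?thesis using hc False unfolding g_def using rpos by simp
    qed
    then show "\<bar>D (q - Suc j) x - (\<Sum>i\<le>Suc j. D (q - Suc j + i) c / fact i * (x - c) ^ i)\<bar>
          \<le> lam * \<bar>x - c\<bar> powr (alpha + real (Suc j)) / fact (Suc j)"
      unfolding goal r_def .
  qed
qed



lemma lo_eq: "1 \<le> a \<Longrightarrow> 1 \<le> n \<Longrightarrow> lo_pt dx a m n = real ((a-1)*4^m + (n-1)) * dx / 4^m"
  unfolding lo_pt_def by (simp add: of_nat_diff field_simps)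

lemma hi_eq: "1 \<le> a \<Longrightarrow> 1 \<le> n \<Longrightarrow> hi_pt dx a m n = real ((a-1)*4^m + (n-1) + 1) * dx / 4^m"
  unfolding hi_pt_def by (simp add: of_nat_diff field_simps)

lemma hi_lo: "hi_pt dx a m n - lo_pt dx a m n = dx / 4^m"
  unfolding hi_pt_def lo_pt_def by (simp add: field_simps)

lemma valid_bounds:
  assumes dx: "dx > 0" and N: "1 / dx = real N" and a: "a \<in> idx dx" and n: "n \<in> {1..4^m}"
  shows "0 \<le> lo_pt dx a m n" "hi_pt dx a m n \<le> 1" "(a-1)*4^m + (n-1) < N * 4^m"
proof -
  have a1: "1 \<le> a" "real a \<le> real N" using a N unfolding idx_def by auto
  hence aN: "a \<le> N" by simp
  have n1: "1 \<le> n" "n \<le> 4^m" using n by auto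
  show "0 \<le> lo_pt dx a m n" unfolding lo_eq[OF a1(1) n1(1)] using dx by simp
  have "(a-1)*4^m + (n-1) < (a-1)*4^m + 4^m" using n1 by simp
  also have "\<dots> = a * 4^m" using a1 by (cases a) auto
  also have "\<dots> \<le> N * 4^m" using aN by simp
  finally show g: "(a-1)*4^m + (n-1) < N * 4^m" .
  have dN: "dx * real N = 1" using N dx by (simp add: field_simps)
  have "real ((a-1)*4^m + (n-1) + 1) \<le> real (N * 4^m)" using g by linarith
  hence "real ((a-1)*4^m + (n-1) + 1) * dx / 4^m \<le> real (N * 4^m) * dx / 4^m"
    using dx by (intro divide_right_mono mult_right_mono) auto
  also have "\<dots> = 1" using dN by (simp add: mult.commute)
  finally show "hi_pt dx a m n \<le> 1" unfolding hi_eq[OF a1(1) n1(1)] .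
qed

lemma subint_props:
  assumes "x \<in> subint dx a m n"
  shows "lo_pt dx a m n \<le> x" "x \<le> hi_pt dx a m n"
  using assms unfolding subint_def by auto

lemma center_dist:
  assumes "x \<in> subint dx a m n"
  shows "\<bar>x - center dx a m n\<bar> \<le> dx / (2 * 4^m)"
proof -
  have e: "dx / (2 * 4^m) = (hi_pt dx a m n - lo_pt dx a m n) / 2" using hi_lo[of dx a m n] by simp
  show ?thesis unfolding e center_def using subint_props[OF assms] by (auto simp: abs_le_iff field_simps)
qed

lemma parent_sub:
  assumes dx: "dx > 0" and m: "1 \<le> m" and n: "1 \<le> n" and x: "x \<in> subint dx a m n"
  shows "x \<in> subint dx a (m-1) (parent n)"
proof -
  obtain m' where m': "m = Suc m'" using m by (cases m) auto
  have p: "parent n = (n-1) div 4 + 1" unfolding parent_def ..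
  have 4: "(4::real)^m = 4 * 4^m'" using m' by simp
  have lo: "lo_pt dx a (m-1) (parent n) \<le> lo_pt dx a m n"
  proof -
    have "real ((n-1) div 4) * 4 \<le> real (n-1)"
      by (metis of_nat_le_iff of_nat_mult of_nat_numeral div_times_less_eq_dividend mult.commute)
    hence "real ((n-1) div 4) * dx / 4^m' \<le> real (n-1) * dx / 4^m"
      unfolding 4 using dx by (simp add: field_simps)
    then show ?thesis unfolding lo_pt_def p m' using n by (simp add: of_nat_diff)
  qed
  have hi: "hi_pt dx a m n \<le> hi_pt dx a (m-1) (parent n)"
  proof -
    have "real n \<le> real ((n-1) div 4 + 1) * 4"
    proof -
      have "n \<le> ((n-1) div 4 + 1) * 4" using n by presburger
      then show ?thesis by (metis of_nat_le_iff of_nat_mult of_nat_numeral)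
    qed
    hence "real n * dx / 4^m \<le> real ((n-1) div 4 + 1) * 4 * dx / 4^m"
      using dx by (intro divide_right_mono mult_right_mono) auto
    also have "\<dots> = real ((n-1) div 4 + 1) * dx / 4^m'" unfolding 4 by (simp add: field_simps)
    finally have "real n * dx / 4^m \<le> real ((n-1) div 4 + 1) * dx / 4^m'" .
    then show ?thesis unfolding hi_pt_def p m' by simp
  qed
  show ?thesis using x lo hi unfolding subint_def by auto
qed

lemma parent_range: "1 \<le> m \<Longrightarrow> n \<in> {1..4^m} \<Longrightarrow> parent n \<in> {1..4^(m-1)}"
  unfolding parent_def by (cases m) auto



lemma no_overlap:
  assumes dx: "dx > 0" and N: "1 / dx = real N"
    and a: "a \<in> idx dx" "n \<in> {1..4^m}" and a': "a' \<in> idx dx" "n' \<in> {1..4^m}"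
    and x: "x \<in> subint dx a m n" "x \<in> subint dx a' m n'"
    and lt: "(a-1)*4^m + (n-1) < (a'-1)*4^m + (n'-1)"
  shows False
proof -
  have a1: "1 \<le> a" "1 \<le> n" "1 \<le> a'" "1 \<le> n'" using a a' unfolding idx_def by auto
  have "real ((a-1)*4^m + (n-1) + 1) \<le> real ((a'-1)*4^m + (n'-1))" using lt by linarith
  hence "real ((a-1)*4^m + (n-1) + 1) * dx / 4^m \<le> real ((a'-1)*4^m + (n'-1)) * dx / 4^m"
    using dx by (intro divide_right_mono mult_right_mono) auto
  hence hl: "hi_pt dx a m n \<le> lo_pt dx a' m n'" unfolding hi_eq[OF a1(1,2)] lo_eq[OF a1(3,4)] .
  have "lo_pt dx a' m n' \<le> x" using subint_props[OF x(2)] by simp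
  hence "\<not> x < hi_pt dx a m n" using hl by simp
  hence h1: "hi_pt dx a m n = 1" using x(1) unfolding subint_def by auto
  have "hi_pt dx a' m n' = lo_pt dx a' m n' + dx / 4^m" using hi_lo[of dx a' m n'] by simp
  moreover have "dx / 4^m > 0" using dx by simp
  moreover have "hi_pt dx a' m n' \<le> 1" using valid_bounds[OF dx N a'] by simp
  ultimately show False using hl h1 by simp
qed

lemma sub_unique:
  assumes dx: "dx > 0" and N: "1 / dx = real N"
    and a: "a \<in> idx dx" "n \<in> {1..4^m}" and a': "a' \<in> idx dx" "n' \<in> {1..4^m}"
    and x: "x \<in> subint dx a m n" "x \<in> subint dx a' m n'"
  shows "a = a' \<and> n = n'"
proof -
  have g: "(a-1)*4^m + (n-1) = (a'-1)*4^m + (n'-1)"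
    using no_overlap[OF dx N a a' x] no_overlap[OF dx N a' a x(2,1)] by (metis linorder_neqE_nat)
  have n1: "n - 1 < 4^m" "n' - 1 < 4^m" using a a' by auto
  have "((a-1)*4^m + (n-1)) div 4^m = a - 1" "((a-1)*4^m + (n-1)) mod 4^m = n - 1"
    using n1 by auto
  moreover have "((a'-1)*4^m + (n'-1)) div 4^m = a' - 1" "((a'-1)*4^m + (n'-1)) mod 4^m = n' - 1"
    using n1 by auto
  ultimately have "a - 1 = a' - 1" "n - 1 = n' - 1" using g by metis+
  then show ?thesis using a a' unfolding idx_def by auto
qed

lemma sub_exists:
  assumes dx: "dx > 0" and N: "1 / dx = real N" and x: "x \<in> {0..1}"
  shows "\<exists>a n. a \<in> idx dx \<and> n \<in> {1..4^m} \<and> x \<in> subint dx a m n"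
proof -
  define K :: nat where "K = 4^m"
  define L where "L = N * K"
  have "1 / dx > 0" using dx by simp
  hence Npos: "N > 0" using N by simp
  have Kpos: "K > 0" unfolding K_def by simp
  have Lpos: "L > 0" unfolding L_def using Npos Kpos by simp
  have dxe: "dx = 1 / real N" by (simp add: N[symmetric])
  obtain g :: nat where g: "g < L" "real g \<le> x * L"
      "x < real (g + 1) / L \<or> (g + 1 = L \<and> x = 1)"
  proof (cases "x = 1")
    case True
    show ?thesis by (rule that[of "L - 1"]) (use True Lpos in \<open>auto simp: of_nat_diff\<close>)
  next
    case False
    hence x1: "x < 1" using x by simp
    define g where "g = nat \<lfloor>x * L\<rfloor>"
    have g0: "real g = of_int \<lfloor>x * L\<rfloor>" unfolding g_def using x by simp
    have "x * L < L" using x1 Lpos by simp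
    hence "\<lfloor>x * L\<rfloor> < int L" by (simp add: floor_less_iff)
    hence "g < L" unfolding g_def using Lpos by simp
    moreover have "real g \<le> x * L" using g0 by linarith
    moreover have "x * L < real g + 1" using g0 by linarith
    hence "x < real (g + 1) / L" using Lpos by (simp add: field_simps)
    ultimately show ?thesis by (intro that) auto
  qed
  define a where "a = g div K + 1"
  define n where "n = g mod K + 1"
  have gdec: "(a-1)*4^m + (n-1) = g" unfolding a_def n_def K_def by (simp add: div_mult_mod_eq)
  have "g div K < N" using g(1) Kpos unfolding L_def by (simp add: div_less_iff_less_mult)
  hence aI: "a \<in> idx dx" unfolding idx_def a_def using N by auto
  have nI: "n \<in> {1..4^m}" unfolding n_def K_def by (simp add: Suc_leI)
  have a1: "1 \<le> a" "1 \<le> n" using aI nI unfolding idx_def by auto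
  have LK: "real L = real N * 4^m" unfolding L_def K_def by simp
  have lo: "lo_pt dx a m n = real g / L" unfolding lo_eq[OF a1] gdec dxe LK by simp
  have hi: "hi_pt dx a m n = real (g+1) / L" unfolding hi_eq[OF a1] gdec dxe LK by simp
  have Lp: "real L > 0" using Lpos by simp
  have l1: "real g / L \<le> x" using g(2) Lp by (simp add: divide_le_eq mult.commute)
  have l2: "x < real (g+1) / L \<or> (real (g+1) / L = 1 \<and> x = 1)"
    using g(3) Lp by (metis divide_self_if less_irrefl of_nat_eq_iff)
  have "x \<in> subint dx a m n"
    unfolding subint_def lo hi using l1 l2 by blast
  then show ?thesis using aI nI by blast
qed



lemma round_grid:
  fixes B dy v :: real
  assumes dy: "dy > 0" and K: "2 * B / dy = real K" and v: "\<bar>v\<bar> \<le> B"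
  shows "\<exists>y\<in>grid B dy m. \<bar>v - y\<bar> \<le> dy / 2^(m+1)"
proof -
  define z where "z = (v + B) * 2^m / dy"
  have z0: "z \<ge> 0" unfolding z_def using v dy by simp
  have "(v + B) * 2^m / dy \<le> (2 * B) * 2^m / dy"
    using v dy by (intro divide_right_mono mult_right_mono) auto
  also have "\<dots> = (2 * B / dy) * 2^m" by simp
  also have "\<dots> = real K * 2^m" using K by simp
  finally have zK: "z \<le> real K * 2^m" unfolding z_def .
  define j where "j = nat \<lfloor>z + 1/2\<rfloor>"
  have jr: "real j = of_int \<lfloor>z + 1/2\<rfloor>" unfolding j_def using z0 by simp
  have f1: "of_int \<lfloor>z + 1/2\<rfloor> \<le> z + 1/2" by (rule of_int_floor_le)
  have f2: "z + 1/2 < of_int \<lfloor>z + 1/2\<rfloor> + 1" by (rule real_of_int_floor_add_one_gt)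
  have zj: "\<bar>z - real j\<bar> \<le> 1/2" using jr f1 f2 by linarith
  have "real_of_int \<lfloor>z + 1/2\<rfloor> < real_of_int (int (K * 2^m) + 1)"
    apply simp using f1 zK by linarith
  hence "\<lfloor>z + 1/2\<rfloor> < int (K * 2^m) + 1" by (simp only: of_int_less_iff)
  hence "\<lfloor>z + 1/2\<rfloor> \<le> int (K * 2^m)" by linarith
  hence "real j \<le> real (K * 2^m)" using jr by (metis of_int_le_iff of_int_of_nat_eq)
  also have "\<dots> = (2 * B / dy) * 2^m" using K by simp
  also have "\<dots> = 2 ^ (m + 1) * B / dy" by simp
  finally have jle: "real j \<le> 2 ^ (m + 1) * B / dy" .
  define y where "y = - B + real j * dy / 2 ^ m"
  have yg: "y \<in> grid B dy m" unfolding grid_def y_def using jle by blast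
  have ve: "v = - B + z * dy / 2^m" unfolding z_def using dy by (simp add: field_simps)
  have "v - y = (z - real j) * (dy / 2^m)" unfolding ve y_def by (simp add: field_simps)
  hence "\<bar>v - y\<bar> = \<bar>z - real j\<bar> * (dy / 2^m)" using dy by (simp add: abs_mult)
  also have "\<dots> \<le> 1/2 * (dy / 2^m)" using zj dy by (intro mult_right_mono) auto
  also have "\<dots> = dy / 2^(m+1)" by simp
  finally show ?thesis using yg by blast
qed

lemma clip_le: "\<bar>v\<bar> \<le> B \<Longrightarrow> \<bar>clip B p - v\<bar> \<le> \<bar>p - v\<bar>"
  unfolding clip_def by (auto simp: abs_le_iff)

lemma clip_id: "\<bar>p\<bar> \<le> c \<Longrightarrow> clip c p = p"
  unfolding clip_def by (auto simp: abs_le_iff)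

lemma exp_sum_le: "(h::real) \<ge> 0 \<Longrightarrow> (\<Sum>i\<le>q. h^i / fact i) \<le> exp h"
proof -
  assume h: "h \<ge> 0"
  obtain t where "exp h = (\<Sum>m<Suc q. h ^ m / fact m) + exp t / fact (Suc q) * h ^ Suc q"
    using Maclaurin_exp_le by blast
  moreover have "exp t / fact (Suc q) * h ^ Suc q \<ge> 0" using h by simp
  ultimately show ?thesis by (simp add: lessThan_Suc_atMost)
qed



lemma sqrt4: "((4::real)^m) powr (1/2) = 2^m"
proof -
  have "(4::real)^m = (2*2)^m" by simp
  also have "\<dots> = (2^m)^2" by (simp only: power_mult_distrib power2_eq_square)
  finally have "(4::real)^m = (2^m)^2" .
  then show ?thesis by (simp add: powr_half_sqrt)
qed

lemma remainder_bound:
  fixes lam alpha gam dx h :: real and q m :: nat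
  assumes lam: "lam > 0" and al: "alpha > 0" and beta: "real q + alpha \<ge> 1/2" and gam: "gam > 0"
    and dxd: "dx = 2 * (fact q * gam / (2 * lam)) powr (1 / (real q + alpha))"
    and h: "0 \<le> h" "h \<le> dx / (2 * 4^m)"
  shows "lam * h powr (alpha + real q) / fact q \<le> gam / 2^(m+1)"
proof -
  define b where "b = real q + alpha"
  define C where "C = fact q * gam / (2 * lam)"
  have bpos: "b > 0" unfolding b_def using al by simp
  have Cpos: "C > 0" unfolding C_def using lam gam by simp
  have hm: "dx / (2 * 4^m) = (dx/2) / 4^m" by simp
  have dx2: "dx / 2 = C powr (1/b)" unfolding dxd C_def b_def by simp
  have "h powr b \<le> (dx / (2 * 4^m)) powr b" using h bpos by (intro powr_mono2) auto
  also have "\<dots> = (dx/2) powr b / (4^m) powr b" unfolding hm using dx2 Cpos by (simp add: powr_divide)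
  also have "(dx/2) powr b = C" unfolding dx2 using Cpos bpos by (simp add: powr_powr)
  also have "((4::real)^m) powr b \<ge> (4^m) powr (1/2)" using beta unfolding b_def by (intro powr_mono) auto
  hence "((4::real)^m) powr b \<ge> 2^m" by (simp add: sqrt4)
  hence "C / ((4::real)^m) powr b \<le> C / 2^m" using Cpos by (intro divide_left_mono) auto
  finally have hb: "h powr b \<le> C / 2^m" .
  have "lam * h powr (alpha + real q) / fact q = (lam / fact q) * h powr b" unfolding b_def by (simp add: add.commute)
  also have "\<dots> \<le> (lam / fact q) * (C / 2^m)" using hb lam by (intro mult_left_mono) auto
  also have "\<dots> = gam / 2^(m+1)" unfolding C_def using lam by (simp add: field_simps)
  finally show ?thesis .
qed

lemma coeff_bound:
  fixes d cf :: "nat \<Rightarrow> real" and e u :: real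
  assumes "\<And>i. i \<le> q \<Longrightarrow> \<bar>d i - cf i\<bar> \<le> e" and "\<bar>u\<bar> \<le> 1"
  shows "\<bar>(\<Sum>i\<le>q. d i / fact i * u^i) - (\<Sum>i\<le>q. cf i / fact i * u^i)\<bar> \<le> e * exp 1"
proof -
  have e0: "e \<ge> 0" using assms(1)[of 0] by simp
  have "(\<Sum>i\<le>q. d i / fact i * u^i) - (\<Sum>i\<le>q. cf i / fact i * u^i) = (\<Sum>i\<le>q. (d i - cf i) * (u^i / fact i))"
    by (simp add: sum_subtractf[symmetric] field_simps)
  hence "\<bar>(\<Sum>i\<le>q. d i / fact i * u^i) - (\<Sum>i\<le>q. cf i / fact i * u^i)\<bar> \<le> (\<Sum>i\<le>q. \<bar>(d i - cf i) * (u^i / fact i)\<bar>)"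
    using sum_abs by metis
  also have "\<dots> \<le> (\<Sum>i\<le>q. e * (\<bar>u\<bar>^i / fact i))"
  proof (rule sum_mono)
    fix i assume "i \<in> {..q}"
    then show "\<bar>(d i - cf i) * (u^i / fact i)\<bar> \<le> e * (\<bar>u\<bar>^i / fact i)"
      using assms(1)[of i] by (simp add: abs_mult power_abs) (intro divide_right_mono mult_right_mono, auto)
  qed
  also have "\<dots> = e * (\<Sum>i\<le>q. \<bar>u\<bar>^i / fact i)" by (simp add: sum_distrib_left)
  also have "\<dots> \<le> e * exp \<bar>u\<bar>" using e0 by (intro mult_left_mono exp_sum_le) auto
  also have "\<dots> \<le> e * exp 1" using e0 assms(2) by (intro mult_left_mono) auto
  finally show ?thesis .
qed



lemma level_approx:
  fixes D :: "nat \<Rightarrow> real \<Rightarrow> real" and f :: "real \<Rightarrow> real"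
    and B lam alpha gam dx dy :: real and q m a n K :: nat
  assumes D0: "\<forall>x\<in>{0..1}. D 0 x = f x"
  and Dd: "\<forall>k<q. \<forall>x\<in>{0..1}. (D k has_real_derivative D (Suc k) x) (at x within {0..1})"
  and Db: "\<forall>k\<le>q. \<forall>x\<in>{0..1}. \<bar>D k x\<bar> \<le> B"
  and H: "\<forall>x\<in>{0..1}. \<forall>y\<in>{0..1}. \<bar>D q x - D q y\<bar> \<le> lam * \<bar>x - y\<bar> powr alpha"
  and lam: "lam > 0" and al: "alpha > 0" and beta: "real q + alpha \<ge> 1/2" and gam: "gam > 0"
  and dxd: "dx = 2 * (fact q * gam / (2 * lam)) powr (1 / (real q + alpha))"
  and dyd: "dy = gam / exp 1" and dx1: "dx \<le> 1" and K: "2 * B / dy = real K" and B: "B > 0"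
  shows "\<exists>P\<in>polyset q B dx dy a m n. (0 \<le> lo_pt dx a m n \<and> hi_pt dx a m n \<le> 1 \<longrightarrow>
            (\<forall>x\<in>subint dx a m n. \<bar>f x - P x\<bar> \<le> gam / 2^m))"
proof -
  have dy: "dy > 0" unfolding dyd using gam by simp
  have dx: "dx > 0" unfolding dxd using lam gam by simp
  define c where "c = center dx a m n"
  show ?thesis
  proof (cases "0 \<le> lo_pt dx a m n \<and> hi_pt dx a m n \<le> 1")
    case False
    have "- B \<in> grid B dy m" unfolding grid_def
      by (rule CollectI, rule exI[of _ 0]) (use B dy in simp)
    hence "(\<lambda>x. clip B (\<Sum>i\<le>q. (\<lambda>i. - B) i / fact i * (x - center dx a m n) ^ i)) \<in> polyset q B dx dy a m n"
      unfolding polyset_def by (intro CollectI exI[of _ "\<lambda>i. - B"]) auto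
    then show ?thesis using False by blast
  next
    case True
    have hl: "hi_pt dx a m n - lo_pt dx a m n = dx / 4^m" by (rule hi_lo)
    have "dx / 4^m > 0" using dx by simp
    hence c01: "c \<in> {0..1}" unfolding c_def center_def using True hl by auto
    have "\<forall>i. \<exists>y. i \<le> q \<longrightarrow> y \<in> grid B dy m \<and> \<bar>D i c - y\<bar> \<le> dy / 2^(m+1)"
      using round_grid[OF dy K] Db c01 by blast
    then obtain cf where cf: "\<And>i. i \<le> q \<Longrightarrow> cf i \<in> grid B dy m \<and> \<bar>D i c - cf i\<bar> \<le> dy / 2^(m+1)"
      by metis
    define P where "P x = clip B (\<Sum>i\<le>q. cf i / fact i * (x - c) ^ i)" for x
    have Pin: "P \<in> polyset q B dx dy a m n"
      unfolding polyset_def P_def c_def using cf by blast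
    have tay: "\<forall>x\<in>{0..1}. \<bar>D (q-q) x - (\<Sum>i\<le>q. D (q-q+i) c / fact i * (x-c)^i)\<bar>
           \<le> lam * \<bar>x-c\<bar> powr (alpha + real q) / fact q"
      by (rule taylor_gen[OF Dd H lam al c01 order_refl])
    have "\<forall>x\<in>subint dx a m n. \<bar>f x - P x\<bar> \<le> gam / 2^m"
    proof
      fix x assume xs: "x \<in> subint dx a m n"
      have x01: "x \<in> {0..1}" using subint_props[OF xs] True by auto
      have xc: "\<bar>x - c\<bar> \<le> dx / (2 * 4^m)" unfolding c_def by (rule center_dist[OF xs])
      have "dx / (2 * 4^m) \<le> 1"
      proof -
        have "(1::real) \<le> 4^m" by (rule one_le_power) simp
        hence h1: "(1::real) \<le> 2 * 4^m" by linarith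
        have "dx / (2 * 4^m) \<le> dx / 1" by (rule divide_left_mono) (use dx h1 in auto)
        hence "dx / (2 * 4^m) \<le> dx" by simp
        then show ?thesis using dx1 by linarith
      qed
      hence xc1: "\<bar>x - c\<bar> \<le> 1" using xc by linarith
      define T where "T = (\<Sum>i\<le>q. D i c / fact i * (x-c)^i)"
      define S where "S = (\<Sum>i\<le>q. cf i / fact i * (x-c)^i)"
      have e1: "\<bar>f x - T\<bar> \<le> gam / 2^(m+1)"
      proof -
        have "\<bar>f x - T\<bar> \<le> lam * \<bar>x-c\<bar> powr (alpha + real q) / fact q"
          using tay x01 D0 unfolding T_def by simp
        also have "\<dots> \<le> gam / 2^(m+1)"
          by (rule remainder_bound[OF lam al beta gam dxd]) (use xc in auto)
        finally show ?thesis .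
      qed
      have e2: "\<bar>T - S\<bar> \<le> gam / 2^(m+1)"
      proof -
        have "\<bar>T - S\<bar> \<le> dy / 2^(m+1) * exp 1"
          unfolding T_def S_def by (rule coeff_bound) (use cf xc1 in auto)
        also have "\<dots> = gam / 2^(m+1)" unfolding dyd by simp
        finally show ?thesis .
      qed
      have fB: "\<bar>f x\<bar> \<le> B" using Db x01 D0 by force
      have "\<bar>P x - f x\<bar> \<le> \<bar>S - f x\<bar>" unfolding P_def S_def by (rule clip_le[OF fB])
      also have "\<dots> \<le> \<bar>f x - T\<bar> + \<bar>T - S\<bar>" by simp
      also have "\<dots> \<le> gam / 2^(m+1) + gam / 2^(m+1)" using e1 e2 by simp
      also have "\<dots> = gam / 2^m" by simp
      finally show "\<bar>f x - P x\<bar> \<le> gam / 2^m" by simp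
    qed
    then show ?thesis using Pin by blast
  qed
qed



lemma collapse2:
  fixes F :: "nat \<Rightarrow> nat \<Rightarrow> real"
  assumes fA: "finite A" and fN: "finite NS" and a0: "a0 \<in> A" and n0: "n0 \<in> NS"
    and u: "\<And>a n. a \<in> A \<Longrightarrow> n \<in> NS \<Longrightarrow> Pr a n \<longleftrightarrow> (a = a0 \<and> n = n0)"
  shows "(\<Sum>a\<in>A. \<Sum>n\<in>NS. F a n * of_bool (Pr a n)) = F a0 n0"
proof -
  have "(\<Sum>a\<in>A. \<Sum>n\<in>NS. F a n * of_bool (Pr a n)) = (\<Sum>a\<in>A. if a = a0 then F a0 n0 else 0)"
  proof (rule sum.cong[OF refl])
    fix a assume a: "a \<in> A"
    have "(\<Sum>n\<in>NS. F a n * of_bool (Pr a n)) = (\<Sum>n\<in>NS. if n = n0 then (if a = a0 then F a0 n0 else 0) else 0)"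
      by (rule sum.cong[OF refl]) (use u a in auto)
    also have "\<dots> = (if a = a0 then F a0 n0 else 0)" using fN n0 by simp
    finally show "(\<Sum>n\<in>NS. F a n * of_bool (Pr a n)) = (if a = a0 then F a0 n0 else 0)" .
  qed
  also have "\<dots> = F a0 n0" using fA a0 by simp
  finally show ?thesis .
qed

lemma collapse1:
  fixes F :: "nat \<Rightarrow> real"
  assumes fA: "finite A" and a0: "a0 \<in> A"
    and u: "\<And>a. a \<in> A \<Longrightarrow> Pr a \<longleftrightarrow> a = a0"
  shows "(\<Sum>a\<in>A. F a * of_bool (Pr a)) = F a0"
proof -
  have "(\<Sum>a\<in>A. F a * of_bool (Pr a)) = (\<Sum>a\<in>A. if a = a0 then F a0 else 0)"
    by (rule sum.cong[OF refl]) (use u in auto)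
  also have "\<dots> = F a0" using fA a0 by simp
  finally show ?thesis .
qed

lemma telescope:
  fixes E :: "nat \<Rightarrow> real" and M :: nat
  shows "(\<Sum>m\<in>{1..M}. (E m - E (m-1))) = E M - E 0"
  by (induction M) (auto simp: add.commute)

lemma finite_idx: "finite (idx dx)"
proof -
  have "idx dx \<subseteq> {..nat \<lceil>1/dx\<rceil>}" unfolding idx_def by (auto simp: le_nat_iff ceiling_le_iff le_ceiling_iff)
  then show ?thesis by (rule finite_subset) simp
qed



theorem lemma10:
  fixes B lam alpha gam dx dy :: real and q :: nat
  assumes "B > 0" and "lam > 0" and "0 < alpha" and "alpha \<le> 1"
    and "real q + alpha \<ge> 1 / 2"
    and "gam > 0"
    and "dx = 2 * (fact q * gam / (2 * lam)) powr (1 / (real q + alpha))"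
    and "dy = gam / exp 1"
    and "1 / dx \<in> \<nat>" and "2 * B / dy \<in> \<nat>"
  shows "(\<forall>f\<in>holder_class B lam q alpha. \<exists>g\<in>Fclass q B gam dx dy 0.
            \<forall>x\<in>{0..1}. \<bar>f x - g x\<bar> \<le> gam)
       \<and> (\<forall>M\<ge>1. \<forall>f\<in>holder_class B lam q alpha. \<exists>g\<in>Fclass q B gam dx dy M.
            \<forall>x\<in>{0..1}. \<bar>f x - g x\<bar> \<le> gam / 2 ^ M)"
proof -
  note B = assms(1) and lam = assms(2) and al = assms(3) and beta = assms(5) and gam = assms(6)
    and dxd = assms(7) and dyd = assms(8)
  have dx: "dx > 0" unfolding dxd using lam gam by simp
  have dy: "dy > 0" unfolding dyd using gam by simp
  obtain N where N: "1 / dx = real N" using assms(9) by (auto elim: Nats_cases)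
  obtain K where K: "2 * B / dy = real K" using assms(10) by (auto elim: Nats_cases)
  have "1 / dx > 0" using dx by simp
  hence "real N \<ge> 1" using N by simp
  hence "1 \<le> 1 / dx" using N by simp
  hence dx1: "dx \<le> 1" using dx by (simp add: le_divide_eq)
  have main: "\<exists>g\<in>Fclass q B gam dx dy M. \<forall>x\<in>{0..1}. \<bar>f x - g x\<bar> \<le> gam / 2 ^ M"
    if f: "f \<in> holder_class B lam q alpha" for f M
  proof -
    obtain D where D0: "\<forall>x\<in>{0..1}. D 0 x = f x"
      and Dd: "\<forall>k<q. \<forall>x\<in>{0..1}. (D k has_real_derivative D (Suc k) x) (at x within {0..1})"
      and Db: "\<forall>k\<le>q. \<forall>x\<in>{0..1}. \<bar>D k x\<bar> \<le> B"
      and H: "\<forall>x\<in>{0..1}. \<forall>y\<in>{0..1}. \<bar>D q x - D q y\<bar> \<le> lam * \<bar>x - y\<bar> powr alpha"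
      using f unfolding holder_class_def by blast
    have "\<forall>t. \<exists>P. P \<in> polyset q B dx dy (fst (snd t)) (fst t) (snd (snd t)) \<and>
        (0 \<le> lo_pt dx (fst (snd t)) (fst t) (snd (snd t)) \<and> hi_pt dx (fst (snd t)) (fst t) (snd (snd t)) \<le> 1 \<longrightarrow>
            (\<forall>x\<in>subint dx (fst (snd t)) (fst t) (snd (snd t)). \<bar>f x - P x\<bar> \<le> gam / 2^(fst t)))"
      using level_approx[OF D0 Dd Db H lam al beta gam dxd dyd dx1 K B] by blast
    then obtain G where G: "\<And>t. G t \<in> polyset q B dx dy (fst (snd t)) (fst t) (snd (snd t)) \<and>
        (0 \<le> lo_pt dx (fst (snd t)) (fst t) (snd (snd t)) \<and> hi_pt dx (fst (snd t)) (fst t) (snd (snd t)) \<le> 1 \<longrightarrow>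
            (\<forall>x\<in>subint dx (fst (snd t)) (fst t) (snd (snd t)). \<bar>f x - G t x\<bar> \<le> gam / 2^(fst t)))"
      by metis
    define Pc where "Pc m a n = G (m, a, n)" for m a n
    have Pc_in: "Pc m a n \<in> polyset q B dx dy a m n" for m a n unfolding Pc_def using G[of "(m,a,n)"] by simp
    have Pc_app: "\<bar>f x - Pc m a n x\<bar> \<le> gam / 2^m"
      if "a \<in> idx dx" "n \<in> {1..4^m}" "x \<in> subint dx a m n" for m a n x
      using G[of "(m,a,n)"] valid_bounds[OF dx N that(1,2)] that(3) unfolding Pc_def by simp
    define Pf where "Pf a = Pc 0 a 1" for a
    define Qf where "Qf a m n = (\<lambda>x. clip (3 * gam / 2 ^ m) (Pc m a n x - Pc (m-1) a (parent n) x))" for a m n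
    define g where "g = (\<lambda>x. (\<Sum>a\<in>idx dx. Pf a x * of_bool (x \<in> subint dx a 0 1)) +
        (\<Sum>m\<in>{1..M}. \<Sum>a\<in>idx dx. \<Sum>n\<in>{1..4 ^ m}. Qf a m n x * of_bool (x \<in> subint dx a m n)))"
    have Qin: "Qf a m n \<in> Qset q B gam dx dy a m n" for a m n
      unfolding Qset_def Qf_def using Pc_in by blast
    have gF: "g \<in> Fclass q B gam dx dy M"
      unfolding Fclass_def g_def
      by (rule CollectI, rule exI[of _ Pf], rule exI[of _ Qf]) (auto simp: Pf_def Pc_in Qin)
    have err: "\<bar>f x - g x\<bar> \<le> gam / 2 ^ M" if x: "x \<in> {0..1}" for x
    proof -
      have "\<forall>m. \<exists>an. fst an \<in> idx dx \<and> snd an \<in> {1..4^m} \<and> x \<in> subint dx (fst an) m (snd an)"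
        using sub_exists[OF dx N x] by auto
      then obtain Sel where Sel: "\<And>m. fst (Sel m) \<in> idx dx \<and> snd (Sel m) \<in> {1..4^m} \<and> x \<in> subint dx (fst (Sel m)) m (snd (Sel m))"
        by metis
      define A where "A m = fst (Sel m)" for m
      define Nn where "Nn m = snd (Sel m)" for m
      have AN: "A m \<in> idx dx" "Nn m \<in> {1..4^m}" "x \<in> subint dx (A m) m (Nn m)" for m
        using Sel[of m] unfolding A_def Nn_def by auto
      have uq: "a \<in> idx dx \<Longrightarrow> n \<in> {1..4^m} \<Longrightarrow> x \<in> subint dx a m n \<longleftrightarrow> (a = A m \<and> n = Nn m)" for a n m
        using sub_unique[OF dx N _ _ AN(1,2)] AN(3) by blast
      have par: "A (m-1) = A m \<and> parent (Nn m) = Nn (m-1)" if m: "1 \<le> m" for m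
      proof -
        have "parent (Nn m) \<in> {1..4^(m-1)}" by (rule parent_range[OF m AN(2)])
        moreover have "x \<in> subint dx (A m) (m-1) (parent (Nn m))"
          by (rule parent_sub[OF dx m _ AN(3)]) (use AN(2) in auto)
        ultimately show ?thesis using uq[of "A m" "parent (Nn m)" "m-1"] AN(1)[of m] by auto
      qed
      define E where "E m = Pc m (A m) (Nn m) x" for m
      have Eb: "\<bar>f x - E m\<bar> \<le> gam / 2^m" for m unfolding E_def by (rule Pc_app[OF AN])
      have N0: "Nn 0 = 1" using AN(2)[of 0] by simp
      have s0: "(\<Sum>a\<in>idx dx. Pf a x * of_bool (x \<in> subint dx a 0 1)) = E 0"
      proof -
        have "(\<Sum>a\<in>idx dx. Pf a x * of_bool (x \<in> subint dx a 0 1)) = Pf (A 0) x"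
          by (rule collapse1[OF finite_idx AN(1)]) (use uq[of _ 1 0] N0 in auto)
        then show ?thesis unfolding Pf_def E_def N0 .
      qed
      have sm: "(\<Sum>a\<in>idx dx. \<Sum>n\<in>{1..4 ^ m}. Qf a m n x * of_bool (x \<in> subint dx a m n)) = E m - E (m-1)"
        if m: "m \<in> {1..M}" for m
      proof -
        have m1: "1 \<le> m" using m by simp
        have "(\<Sum>a\<in>idx dx. \<Sum>n\<in>{1..4 ^ m}. Qf a m n x * of_bool (x \<in> subint dx a m n)) = Qf (A m) m (Nn m) x"
          by (rule collapse2[OF finite_idx _ AN(1,2)]) (use uq in auto)
        also have "\<dots> = clip (3 * gam / 2 ^ m) (E m - E (m-1))"
          unfolding Qf_def E_def using par[OF m1] by simp
        also have "\<dots> = E m - E (m-1)"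
        proof (rule clip_id)
          have "\<bar>E m - E (m-1)\<bar> \<le> \<bar>f x - E m\<bar> + \<bar>f x - E (m-1)\<bar>" by simp
          also have "\<dots> \<le> gam / 2^m + gam / 2^(m-1)" using Eb by (intro add_mono) auto
          also have "gam / 2^(m-1) = 2 * gam / 2^m" using m1 by (cases m) auto
          finally show "\<bar>E m - E (m-1)\<bar> \<le> 3 * gam / 2 ^ m" by simp
        qed
        finally show ?thesis .
      qed
      have "g x = E 0 + (\<Sum>m\<in>{1..M}. (E m - E (m-1)))"
        unfolding g_def using s0 sm by simp
      also have "\<dots> = E M" using telescope[of E M] by simp
      finally show ?thesis using Eb[of M] by simp
    qed
    show ?thesis using gF err by blast
  qed
  show ?thesis using main[where M=0] main by auto
qed


end
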